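(* Let $n\in\mathbb{N}$, $\varkappa\in\mathbb{N}^n$, $N=|\varkappa|$, $m\in\mathbb{N}_0$, and let $y_1,\ldots,y_n$ be indeterminates (or pairwise distinct elements of a field). Then \[ \hom_m\bigl(y^{[\varkappa]}\bigr)=\frac{\det G_{(m)}(y,\varkappa)}{\det G_\emptyset(y,\varkappa)}, \] where $(m)$ is the one-part partition (and $(0)=\emptyset$).
   Context: $\mathbb{N}=\{1,2,\ldots\}$, $\mathbb{N}_0=\{0,1,2,\ldots\}$. $\hom_m(x_1,\ldots,x_N)=\sum_{k\in\mathbb{N}_0^N,\,|k|=m}x_1^{k_1}\cdots x_N^{k_N}$ is the complete homogeneous symmetric polynomial. For $\varkappa\in\mathbb{N}^n$, $y^{[\varkappa]}$ denotes the list of length $|\varkappa|$ in which $y_1$ is repeated $\varkappa_1$ times, then $y_2$ repeated $\varkappa_2$ times, etc. Partitions are extended by zeros to length $N$. Each $p\in\{1,\ldots,N\}$ is written uniquely as $p=\varkappa_1+\cdots+\varkappa_{q-1}+r$ with $1\le q\le n$, $1\le r\le\varkappa_q$. For a partition $\lambda$ of length $\le N$, $G_\lambda(y,\varkappa)$ is the $N\times N$ matrix with entries $G_\lambda(y,\varkappa)_{j,p}=\binom{N+\lambda_j-j}{r-1}y_q^{N+\lambda_j-j-r+1}$ if $N+\lambda_j-j-r+1\ge0$ and $0$ otherwise. *)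

theory Defs
  imports "Jordan_Normal_Form.Determinant"
begin

definition hom_sym :: "nat \<Rightarrow> 'a::comm_ring_1 list \<Rightarrow> 'a" where
  "hom_sym m xs = (\<Sum>k\<in>{k::nat\<Rightarrow>nat. (\<forall>i\<ge>length xs. k i = 0) \<and> (\<Sum>i<length xs. k i) = m}.
                      \<Prod>i<length xs. (xs ! i) ^ k i)"

definition rep_list :: "nat \<Rightarrow> (nat \<Rightarrow> 'a) \<Rightarrow> (nat \<Rightarrow> nat) \<Rightarrow> 'a list" where
  "rep_list n y \<kappa> = concat (map (\<lambda>i. replicate (\<kappa> i) (y i)) [1..<n+1])"

text \<open>Decomposition p = kappa_1 + ... + kappa_(q-1) + r with 1 \<le> r \<le> kappa_q.\<close>
definition blk_q :: "(nat \<Rightarrow> nat) \<Rightarrow> nat \<Rightarrow> nat" where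
  "blk_q \<kappa> p = (LEAST q. p \<le> (\<Sum>i=1..q. \<kappa> i))"

definition blk_r :: "(nat \<Rightarrow> nat) \<Rightarrow> nat \<Rightarrow> nat" where
  "blk_r \<kappa> p = p - (\<Sum>i=1..blk_q \<kappa> p - 1. \<kappa> i)"

text \<open>The N x N matrix G_lambda(y,kappa), N = |kappa|; lambda is a 1-indexed partition
  (extended by zeros). JNF matrices are 0-indexed, so entry (j0,p0) is G_{j0+1,p0+1}.\<close>
definition G_mat :: "(nat \<Rightarrow> nat) \<Rightarrow> nat \<Rightarrow> (nat \<Rightarrow> 'a::comm_ring_1) \<Rightarrow> (nat \<Rightarrow> nat) \<Rightarrow> 'a mat" where
  "G_mat lam n y \<kappa> = (let N = (\<Sum>i=1..n. \<kappa> i) in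
     mat N N (\<lambda>(j0, p0).
       let j = j0 + 1; p = p0 + 1; q = blk_q \<kappa> p; r = blk_r \<kappa> p;
           e = int N + int (lam j) - int j - int r + 1
       in if e \<ge> 0 then of_nat ((N + lam j - j) choose (r - 1)) * y q ^ nat e else 0))"

definition one_part :: "nat \<Rightarrow> nat \<Rightarrow> nat" where
  "one_part m = (\<lambda>j. if j = 1 then m else 0)"

definition empty_part :: "nat \<Rightarrow> nat" where
  "empty_part = (\<lambda>_. 0)"

end

theory Submission
  imports Defs
begin


fun H :: "nat \<Rightarrow> 'a::comm_ring_1 list \<Rightarrow> 'a" where
  "H m [] = (if m = 0 then 1 else 0)"
| "H m (a#xs) = (\<Sum>i\<le>m. a^i * H (m-i) xs)"

declare H.simps(2)[simp del]

definition SS :: "nat \<Rightarrow> nat \<Rightarrow> (nat \<Rightarrow> nat) set" where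
  "SS L m = {k::nat\<Rightarrow>nat. (\<forall>i\<ge>L. k i = 0) \<and> (\<Sum>i<L. k i) = m}"

lemma finite_SS: "finite (SS L m)"
proof -
  have inj: "inj_on (\<lambda>k. restrict k {..<L}) (SS L m)"
  proof (rule inj_onI)
    fix k k' assume "k \<in> SS L m" "k' \<in> SS L m" "restrict k {..<L} = restrict k' {..<L}"
    note A = this
    show "k = k'"
    proof (rule ext)
      fix i
      show "k i = k' i"
      proof (cases "i < L")
        case True
        have "restrict k {..<L} i = restrict k' {..<L} i" using A(3) by simp
        then show ?thesis using True by simp
      next
        case False
        then show ?thesis using A(1,2) unfolding SS_def by auto
      qed
    qed
  qed
  have sub: "(\<lambda>k. restrict k {..<L}) ` SS L m \<subseteq> PiE {..<L} (\<lambda>_. {..m})"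
  proof
    fix f assume "f \<in> (\<lambda>k. restrict k {..<L}) ` SS L m"
    then obtain k where k: "k \<in> SS L m" "f = restrict k {..<L}" by auto
    have "\<And>i. i < L \<Longrightarrow> k i \<le> m"
    proof -
      fix i assume "i < L"
      then have "k i \<le> (\<Sum>i<L. k i)" by (intro member_le_sum) auto
      then show "k i \<le> m" using k unfolding SS_def by auto
    qed
    then show "f \<in> PiE {..<L} (\<lambda>_. {..m})" using k by auto
  qed
  have "finite ((\<lambda>k. restrict k {..<L}) ` SS L m)"
    by (rule finite_subset[OF sub]) (simp add: finite_PiE)
  then show ?thesis using finite_imageD inj by blast
qed

lemma hom_sym_H: "hom_sym m xs = H m xs"
proof (induction xs arbitrary: m)
  case Nil
  show ?case
  proof (cases "m = 0")
    case True
    have "{k::nat\<Rightarrow>nat. (\<forall>i\<ge>length ([]::'a list). k i = 0) \<and> (\<Sum>i<length ([]::'a list). k i) = m} = {\<lambda>_. 0}"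
      using True by auto
    then show ?thesis unfolding hom_sym_def using True by simp
  next
    case False
    have "{k::nat\<Rightarrow>nat. (\<forall>i\<ge>length ([]::'a list). k i = 0) \<and> (\<Sum>i<length ([]::'a list). k i) = m} = {}"
      using False by auto
    then show ?thesis unfolding hom_sym_def using False by simp
  qed
next
  case (Cons a xs)
  define L where "L = length xs"
  have "hom_sym m (a#xs) = (\<Sum>k\<in>SS (Suc L) m. \<Prod>i<Suc L. (a#xs) ! i ^ k i)"
    unfolding hom_sym_def SS_def L_def by simp
  also have "\<dots> = (\<Sum>k\<in>SS (Suc L) m. a ^ k 0 * (\<Prod>i<L. xs ! i ^ k (Suc i)))"
    by (subst prod.lessThan_Suc_shift) simp
  also have "\<dots> = (\<Sum>(i,k')\<in>Sigma {..m} (\<lambda>i. SS L (m-i)). a ^ i * (\<Prod>j<L. xs ! j ^ k' j))"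
  proof (rule sum.reindex_bij_witness[where i = "\<lambda>(i,k'). case_nat i k'" and j = "\<lambda>k. (k 0, k \<circ> Suc)"])
    fix k assume "k \<in> SS (Suc L) m"
    show "(case (k 0, k \<circ> Suc) of (i, k') \<Rightarrow> case_nat i k') = k"
      by (auto split: nat.split)
    have s: "(\<Sum>i<Suc L. k i) = k 0 + (\<Sum>i<L. k (Suc i))" by (rule sum.lessThan_Suc_shift)
    have k1: "\<forall>i\<ge>Suc L. k i = 0" and k2: "(\<Sum>i<Suc L. k i) = m"
      using \<open>k \<in> SS (Suc L) m\<close> unfolding SS_def by auto
    have "k 0 \<le> m" using k2 s by linarith
    moreover have "\<forall>i\<ge>L. (k \<circ> Suc) i = 0" using k1 by simp
    moreover have "(\<Sum>i<L. (k \<circ> Suc) i) = m - k 0" using k2 s by simp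
    ultimately show "(k 0, k \<circ> Suc) \<in> Sigma {..m} (\<lambda>i. SS L (m - i))"
      unfolding SS_def by simp
    show "(case (k 0, k \<circ> Suc) of (i, k') \<Rightarrow> a ^ i * (\<Prod>j<L. xs ! j ^ k' j)) = a ^ k 0 * (\<Prod>i<L. xs ! i ^ k (Suc i))"
      by simp
  next
    fix b assume b: "b \<in> Sigma {..m} (\<lambda>i. SS L (m - i))"
    obtain i k' where [simp]: "b = (i,k')" by (cases b)
    show "(case (case b of (i, k') \<Rightarrow> case_nat i k') of k \<Rightarrow> (k 0, k \<circ> Suc)) = b"
      by auto
    have s: "(\<Sum>j<Suc L. case_nat i k' j) = i + (\<Sum>j<L. k' j)" by (subst sum.lessThan_Suc_shift) simp
    have b1: "i \<le> m" "\<forall>j\<ge>L. k' j = 0" "(\<Sum>j<L. k' j) = m - i"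
      using b unfolding SS_def by auto
    have "\<forall>j\<ge>Suc L. case_nat i k' j = 0"
    proof (intro allI impI)
      fix j :: nat assume "j \<ge> Suc L"
      then obtain j' where "j = Suc j'" "j' \<ge> L" by (cases j) auto
      then show "case_nat i k' j = 0" using b1 by simp
    qed
    moreover have "(\<Sum>j<Suc L. case_nat i k' j) = m" using s b1 by simp
    ultimately show "(case b of (i, x) \<Rightarrow> case_nat i x) \<in> SS (Suc L) m"
      unfolding SS_def by simp
  qed
  also have "\<dots> = (\<Sum>i\<le>m. \<Sum>k'\<in>SS L (m-i). a ^ i * (\<Prod>j<L. xs ! j ^ k' j))"
    by (rule sum.Sigma[symmetric]) (auto simp: finite_SS)
  also have "\<dots> = (\<Sum>i\<le>m. a ^ i * hom_sym (m-i) xs)"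
    unfolding hom_sym_def SS_def L_def by (simp add: sum_distrib_left)
  also have "\<dots> = H m (a#xs)" using Cons by (simp add: H.simps(2))
  finally show ?case .
qed

lemma H_0[simp]: "H 0 xs = 1"
  by (induction xs) (auto simp: H.simps(2))

lemma H_Suc_Cons: "H (Suc j) (a#xs) = a * H j (a#xs) + H (Suc j) xs"
proof -
  have "H (Suc j) (a#xs) = H (Suc j) xs + (\<Sum>i\<le>j. a^(Suc i) * H (j - i) xs)"
    by (simp add: H.simps(2) sum.atMost_Suc_shift del: sum.atMost_Suc)
  also have "\<dots> = a * H j (a#xs) + H (Suc j) xs"
    by (simp add: H.simps(2) sum_distrib_left mult.assoc)
  finally show ?thesis .
qed

lemma H_single: "H m [a] = a ^ m"
proof -
  have "H m [a] = (\<Sum>i\<le>m. a^i * (if m - i = 0 then 1 else 0))" by (simp add: H.simps(2))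
  also have "\<dots> = (\<Sum>i\<le>m. if i = m then a^i else 0)"
    by (intro sum.cong) auto
  finally show ?thesis by simp
qed

lemma H_diff: "H (Suc j) (t#zs) - H (Suc j) (b#zs) = (t - b) * H j (t#b#zs)"
proof (induction j)
  case 0
  then show ?case by (simp add: H_Suc_Cons[of 0] algebra_simps)
next
  case (Suc j)
  have "H (Suc (Suc j)) (t#zs) - H (Suc (Suc j)) (b#zs) = t * H (Suc j) (t#zs) - b * H (Suc j) (b#zs)"
    by (simp only: H_Suc_Cons[of "Suc j"]) simp
  also have "\<dots> = t * (H (Suc j) (t#zs) - H (Suc j) (b#zs)) + (t - b) * H (Suc j) (b#zs)"
    by (simp add: algebra_simps)
  also have "\<dots> = (t - b) * H (Suc j) (t#b#zs)"
    using Suc by (simp only: H_Suc_Cons[of j t "b#zs"]) (simp add: algebra_simps)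
  finally show ?case .
qed

lemma const_pow: "[:a:] ^ n = [:a ^ n:]"
  by (induction n) (simp_all add: mult_to_poly mult.commute)

lemma H_const: "H j (map (\<lambda>x. [:x:]) xs) = [:H j xs:]"
proof (induction xs arbitrary: j)
  case Nil then show ?case by simp
next
  case (Cons a xs)
  have "H j (map (\<lambda>x. [:x:]) (a#xs)) = (\<Sum>i\<le>j. [:a^i * H (j-i) xs:])"
    using Cons by (simp add: H.simps(2) const_pow mult_to_poly mult.commute)
  also have "\<dots> = [:H j (a#xs):]" by (simp add: H.simps(2) sum_to_poly)
  finally show ?case .
qed



definition Pl :: "'a::comm_ring_1 list \<Rightarrow> 'a poly" where
  "Pl xs = prod_list (map (\<lambda>x. [:-x, 1:]) xs)"

lemma Pl_coeff: "coeff (Pl xs) (length xs) = 1 \<and> (\<forall>i>length xs. coeff (Pl xs) i = 0)"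
proof (induction xs)
  case Nil then show ?case by (simp add: Pl_def coeff_pCons split: nat.split)
next
  case (Cons b ys)
  have e: "Pl (b#ys) = smult (-b) (Pl ys) + pCons 0 (Pl ys)"
    by (simp add: Pl_def mult_pCons_left)
  show ?case
  proof
    show "coeff (Pl (b#ys)) (length (b#ys)) = 1" using Cons by (simp add: e)
    show "\<forall>i>length (b#ys). coeff (Pl (b#ys)) i = 0"
    proof (intro allI impI)
      fix i assume "i > length (b#ys)"
      then obtain i' where "i = Suc i'" "i' > length ys" by (cases i) auto
      then show "coeff (Pl (b#ys)) i = 0" using Cons by (simp add: e)
    qed
  qed
qed

lemma newton:
  fixes xs :: "'a::comm_ring_1 list"
  shows "\<exists>R. [:0,1:] ^ M = R + (if length xs \<le> M then H (M - length xs) ([:0,1:] # map (\<lambda>x. [:x:]) xs) else 0) * Pl xs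
     \<and> (\<forall>i\<ge>length xs. coeff R i = 0)
     \<and> (length xs \<ge> 1 \<longrightarrow> coeff R (length xs - 1) = (if length xs - 1 \<le> M then H (M + 1 - length xs) xs else 0))"
proof (induction xs)
  case Nil
  show ?case by (rule exI[of _ 0]) (simp add: Pl_def H_single)
next
  case (Cons b ys)
  define L where "L = length ys"
  define X where "X = ([:0,1:] :: 'a poly)"
  define ys' where "ys' = map (\<lambda>x. [:x:]) ys"
  from Cons obtain R where R: "X ^ M = R + (if L \<le> M then H (M - L) (X # ys') else 0) * Pl ys"
     "\<forall>i\<ge>L. coeff R i = 0" unfolding L_def X_def ys'_def by blast
  have PL: "Pl (b#ys) = [:-b,1:] * Pl ys" by (simp add: Pl_def)
  have c1: "coeff (Pl ys) L = 1" and c0: "\<And>i. i > L \<Longrightarrow> coeff (Pl ys) i = 0"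
    using Pl_coeff[of ys] unfolding L_def by auto
  consider "M < L" | "M = L" | j where "M = L + Suc j"
    by (metis add_Suc_right less_imp_Suc_add linorder_neqE_nat)
  then show ?case
  proof cases
    case 1
    then have "X ^ M = R" using R by simp
    then show ?thesis using 1 R(2) unfolding X_def L_def by (intro exI[of _ R]) auto
  next
    case 2
    then have "X ^ M = R + Pl ys" using R by simp
    then show ?thesis using 2 R(2) c1 c0 unfolding X_def L_def
      by (intro exI[of _ "R + Pl ys"]) auto
  next
    case 3
    define c where "c = H (Suc j) (b#ys)"
    have hd: "H (Suc j) (X # ys') = [:c:] + [:-b,1:] * H j (X # [:b:] # ys')"
    proof -
      have "H (Suc j) (X # ys') - H (Suc j) ([:b:] # ys') = (X - [:b:]) * H j (X # [:b:] # ys')"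
        by (rule H_diff)
      moreover have "H (Suc j) ([:b:] # ys') = [:c:]"
        using H_const[of "Suc j" "b#ys"] unfolding c_def ys'_def by simp
      moreover have "X - [:b:] = [:-b,1:]" unfolding X_def by simp
      ultimately show ?thesis by (simp add: algebra_simps)
    qed
    have "X ^ M = R + H (Suc j) (X # ys') * Pl ys" using R(1) 3 by simp
    also have "\<dots> = R + ([:c:] + [:-b,1:] * H j (X # [:b:] # ys')) * Pl ys" using hd by simp
    also have "\<dots> = (R + [:c:] * Pl ys) + H j (X # [:b:] # ys') * ([:-b,1:] * Pl ys)"
      by (simp add: algebra_simps)
    also have "\<dots> = (R + [:c:] * Pl ys) + H j (X # [:b:] # ys') * Pl (b#ys)" using PL by simp
    finally have "X ^ M = (R + [:c:] * Pl ys) + H j (X # [:b:] # ys') * Pl (b#ys)" .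
    moreover have "\<forall>i\<ge>Suc L. coeff (R + [:c:] * Pl ys) i = 0"
      using R(2) c0 by auto
    moreover have "coeff (R + [:c:] * Pl ys) L = c" using R(2) c1 by simp
    ultimately show ?thesis using 3 unfolding X_def L_def ys'_def
      by (intro exI[of _ "R + [:c:] * Pl ys"]) (auto simp: c_def)
  qed
qed

definition Lf :: "'a::comm_ring_1 \<Rightarrow> nat \<Rightarrow> 'a poly \<Rightarrow> 'a" where
  "Lf a k f = coeff (pcompose f [:a,1:]) k"

lemma Lf_add: "Lf a k (f + g) = Lf a k f + Lf a k g"
  by (simp add: Lf_def pcompose_add)

lemma Lf_smult: "Lf a k (smult c f) = c * Lf a k f"
  by (simp add: Lf_def pcompose_smult)

lemma Lf_sum: "Lf a k (sum f A) = (\<Sum>i\<in>A. Lf a k (f i))"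
  by (simp add: Lf_def pcompose_sum coeff_sum)

lemma pcompose_power: "pcompose (p ^ n) q = (pcompose p q) ^ n"
  by (induction n) (simp_all add: pcompose_mult one_pCons)

lemma Lf_X_pow: "Lf a k ([:0,1:] ^ i) = of_nat (i choose k) * a ^ (i - k)"
proof (cases "k \<le> i")
  case True
  then show ?thesis by (simp add: Lf_def pcompose_power pcompose_pCons coeff_linear_poly_power)
next
  case False
  have "degree ([:a,1:] ^ i) \<le> i" by (rule order.trans[OF degree_power_le]) simp
  then have "coeff ([:a,1:] ^ i) k = 0" using False by (intro coeff_eq_0) simp
  then show ?thesis using False by (simp add: Lf_def pcompose_power pcompose_pCons binomial_eq_0)
qed

lemma shift_comp: fixes a :: "'a::comm_ring_1" shows "pcompose [:-a, 1:] [:a, 1:] = [:0, 1:]"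
  by (simp add: pcompose_pCons)

lemma shift_comp2: fixes a :: "'a::comm_ring_1" shows "pcompose [:a, 1:] [:-a, 1:] = [:0, 1:]"
  by (simp add: pcompose_pCons)

lemma X_pow_monom: "([:0,1:] :: 'a::comm_ring_1 poly) ^ n = monom 1 n"
  by (simp add: monom_altdef)

lemma Lf_vanish:
  assumes "k < K" "[:-a,1:] ^ K dvd f"
  shows "Lf a k f = 0"
proof -
  obtain g where "f = [:-a,1:] ^ K * g" using assms(2) by (rule dvdE)
  then have "pcompose f [:a,1:] = monom 1 K * pcompose g [:a,1:]"
    by (simp add: pcompose_mult pcompose_power shift_comp X_pow_monom)
  then show ?thesis using assms(1) by (simp add: Lf_def coeff_monom_mult)
qed

lemma Lf_dvd:
  assumes "\<forall>k<K. Lf a k f = 0"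
  shows "[:-a,1:] ^ K dvd f"
proof -
  have "monom 1 K dvd pcompose f [:a,1:]"
    using assms unfolding monom_1_dvd_iff' Lf_def by simp
  then obtain g where g: "pcompose f [:a,1:] = monom 1 K * g" by (rule dvdE)
  have "f = pcompose (pcompose f [:a,1:]) [:-a,1:]"
    by (simp add: pcompose_assoc[symmetric] shift_comp2)
  also have "\<dots> = [:-a,1:] ^ K * pcompose g [:-a,1:]"
    unfolding g by (simp add: pcompose_mult X_pow_monom[symmetric] pcompose_power pcompose_pCons)
  finally show ?thesis by simp
qed



definition cs :: "(nat \<Rightarrow> nat) \<Rightarrow> nat \<Rightarrow> nat" where
  "cs \<kappa> q = (\<Sum>i=1..q. \<kappa> i)"

lemma cs_mono: "q' \<le> q \<Longrightarrow> cs \<kappa> q' \<le> cs \<kappa> q"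
  unfolding cs_def by (intro sum_mono2) auto

lemma cs_Suc: "cs \<kappa> (Suc q) = cs \<kappa> q + \<kappa> (Suc q)"
  unfolding cs_def by simp

lemma blk_props:
  assumes "1 \<le> p" "p \<le> cs \<kappa> n"
  shows "1 \<le> blk_q \<kappa> p \<and> blk_q \<kappa> p \<le> n \<and> cs \<kappa> (blk_q \<kappa> p - 1) < p \<and> p \<le> cs \<kappa> (blk_q \<kappa> p)
         \<and> blk_r \<kappa> p = p - cs \<kappa> (blk_q \<kappa> p - 1) \<and> 1 \<le> blk_r \<kappa> p \<and> blk_r \<kappa> p \<le> \<kappa> (blk_q \<kappa> p)"
proof -
  define q where "q = blk_q \<kappa> p"
  have q_def': "q = (LEAST q. p \<le> cs \<kappa> q)" unfolding q_def blk_q_def cs_def by simp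
  have le: "p \<le> cs \<kappa> q" unfolding q_def' using assms(2) by (rule LeastI)
  have qn: "q \<le> n" unfolding q_def' using assms(2) by (rule Least_le)
  have c0: "cs \<kappa> 0 = 0" by (simp add: cs_def)
  have q0: "q \<noteq> 0" using le assms(1) c0 by (cases q) auto
  have lt: "cs \<kappa> (q - 1) < p"
  proof -
    have "q - 1 < q" using q0 by simp
    then have "\<not> p \<le> cs \<kappa> (q - 1)" unfolding q_def' by (rule not_less_Least)
    then show ?thesis by simp
  qed
  have r: "blk_r \<kappa> p = p - cs \<kappa> (q - 1)" unfolding blk_r_def cs_def q_def by simp
  have cq: "cs \<kappa> q = cs \<kappa> (q - 1) + \<kappa> q"
    using q0 cs_Suc[of \<kappa> "q - 1"] by simp
  show ?thesis using le qn q0 lt r cq unfolding q_def[symmetric] by auto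
qed

lemma blk_inv:
  assumes "1 \<le> q" "1 \<le> r" "r \<le> \<kappa> q"
  shows "blk_q \<kappa> (cs \<kappa> (q - 1) + r) = q \<and> blk_r \<kappa> (cs \<kappa> (q - 1) + r) = r"
proof -
  have cq: "cs \<kappa> q = cs \<kappa> (q - 1) + \<kappa> q"
    using assms(1) cs_Suc[of \<kappa> "q - 1"] by simp
  have "(LEAST q'. cs \<kappa> (q - 1) + r \<le> cs \<kappa> q') = q"
  proof (rule Least_equality)
    show "cs \<kappa> (q - 1) + r \<le> cs \<kappa> q" using cq assms by simp
  next
    fix q' assume a: "cs \<kappa> (q - 1) + r \<le> cs \<kappa> q'"
    show "q \<le> q'"
    proof (rule ccontr)
      assume "\<not> q \<le> q'"
      then have "cs \<kappa> q' \<le> cs \<kappa> (q - 1)" by (intro cs_mono) simp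
      then show False using a assms by simp
    qed
  qed
  then have bq: "blk_q \<kappa> (cs \<kappa> (q - 1) + r) = q" unfolding blk_q_def cs_def by simp
  have "blk_r \<kappa> (cs \<kappa> (q - 1) + r) = cs \<kappa> (q - 1) + r - cs \<kappa> (q - 1)"
    unfolding blk_r_def bq by (simp add: cs_def)
  then show ?thesis using bq by simp
qed

lemma Pl_append: "Pl (xs @ ys) = Pl xs * Pl ys"
  by (simp add: Pl_def)

lemma Pl_replicate: "Pl (replicate k x) = [:-x,1:] ^ k"
  by (simp add: Pl_def prod_list_replicate)

lemma Pl_concat: "Pl (concat (map g L)) = prod_list (map (\<lambda>i. Pl (g i)) L)"
  by (induction L) (simp_all add: Pl_append, simp add: Pl_def)

lemma Pl_rep_list: "Pl (rep_list n y \<kappa>) = (\<Prod>q=1..n. [:-y q,1:] ^ \<kappa> q)"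
proof -
  have "Pl (rep_list n y \<kappa>) = prod_list (map (\<lambda>i. [:-y i,1:] ^ \<kappa> i) [1..<n+1])"
    unfolding rep_list_def Pl_concat by (simp add: Pl_replicate)
  also have "\<dots> = (\<Prod>q\<in>set [1..<n+1]. [:-y q,1:] ^ \<kappa> q)"
    by (rule prod.distinct_set_conv_list[symmetric]) simp
  also have "set [1..<n+1] = {1..n}" by auto
  finally show ?thesis .
qed

lemma length_rep_list: "length (rep_list n y \<kappa>) = cs \<kappa> n"
proof -
  have "length (rep_list n y \<kappa>) = sum_list (map \<kappa> [1..<n+1])"
    unfolding rep_list_def by (simp add: length_concat comp_def)
  also have "\<dots> = (\<Sum>q\<in>set [1..<n+1]. \<kappa> q)"
    by (rule sum.distinct_set_conv_list[symmetric]) simp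
  also have "set [1..<n+1] = {1..n}" by auto
  finally show ?thesis unfolding cs_def .
qed

lemma degree_Pl: "degree (Pl xs) = length xs"
proof -
  have "coeff (Pl xs) (length xs) = 1" "\<forall>i>length xs. coeff (Pl xs) i = 0" using Pl_coeff by auto
  then show ?thesis by (metis degree_le le_antisym le_degree one_neq_zero)
qed

lemma Pl_nonzero: "Pl xs \<noteq> (0::'a::comm_ring_1 poly)"
proof
  assume "Pl xs = 0"
  then have "coeff (Pl xs) (length xs) = 0" by simp
  then show False using Pl_coeff[of xs] by simp
qed

lemma prod_dvd:
  fixes y :: "nat \<Rightarrow> 'a::field"
  assumes "finite Q" "inj_on y Q" "\<forall>q\<in>Q. [:-y q,1:] ^ K q dvd f" "f \<noteq> 0"
  shows "(\<Prod>q\<in>Q. [:-y q,1:] ^ K q) dvd f"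
  using assms
proof (induction Q rule: finite_induct)
  case empty then show ?case by simp
next
  case (insert q Q)
  have "(\<Prod>q\<in>Q. [:-y q,1:] ^ K q) dvd f" using insert by (auto intro: insert.IH simp: inj_on_insert)
  then obtain g where g: "f = (\<Prod>q\<in>Q. [:-y q,1:] ^ K q) * g" by (rule dvdE)
  have pv: "poly (\<Prod>q\<in>Q. [:-y q,1:] ^ K q) (y q) \<noteq> 0"
  proof -
    have "\<forall>q'\<in>Q. y q - y q' \<noteq> 0" using insert(2,4) by (auto simp: inj_on_def)
    then show ?thesis by (simp add: poly_prod insert(1))
  qed
  have "K q \<le> order (y q) f" using insert(5) insert(6) by (simp add: order_divides)
  also have "order (y q) f = order (y q) (\<Prod>q\<in>Q. [:-y q,1:] ^ K q) + order (y q) g"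
    using g insert(6) by (simp add: order_mult)
  also have "order (y q) (\<Prod>q\<in>Q. [:-y q,1:] ^ K q) = 0" using pv by (rule order_0I)
  finally have "[:-y q,1:] ^ K q dvd g" by (simp add: order_divides)
  then obtain g' where "g = [:-y q,1:] ^ K q * g'" by (rule dvdE)
  then have "f = (\<Prod>q\<in>insert q Q. [:-y q,1:] ^ K q) * g'"
    using g insert(1,2) by (simp add: algebra_simps)
  then show ?case by simp
qed



theorem corollary2:
  fixes n m :: nat and \<kappa> :: "nat \<Rightarrow> nat" and y :: "nat \<Rightarrow> 'a::field"
  assumes "n \<ge> 1"
    and "\<forall>i\<in>{1..n}. \<kappa> i \<ge> 1"
    and "\<forall>i\<in>{1..n}. \<forall>j\<in>{1..n}. i \<noteq> j \<longrightarrow> y i \<noteq> y j"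
  shows "hom_sym m (rep_list n y \<kappa>) = det (G_mat (one_part m) n y \<kappa>) / det (G_mat empty_part n y \<kappa>)"
proof -
  define N where "N = cs \<kappa> n"
  define xs where "xs = rep_list n y \<kappa>"
  have lenxs: "length xs = N" unfolding xs_def N_def by (rule length_rep_list)
  have N_def': "(\<Sum>i=1..n. \<kappa> i) = N" by (simp add: N_def cs_def)
  have N1: "N \<ge> 1"
  proof -
    have "cs \<kappa> 1 \<le> cs \<kappa> n" using assms(1) by (rule cs_mono)
    moreover have "cs \<kappa> 1 = \<kappa> 1" by (simp add: cs_def)
    moreover have "\<kappa> 1 \<ge> 1" using assms(1,2) by auto
    ultimately show ?thesis unfolding N_def by simp
  qed
  define X where "X = ([:0,1:] :: 'a poly)"
  define Lp where "Lp p0 = Lf (y (blk_q \<kappa> (Suc p0))) (blk_r \<kappa> (Suc p0) - 1)" for p0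
  have entry: "G_mat lam n y \<kappa> $$ (j0,p0) = Lp p0 (X ^ (N + lam (Suc j0) - Suc j0))"
    if j0: "j0 < N" and p0: "p0 < N" for lam j0 p0
  proof -
    have bp: "1 \<le> blk_r \<kappa> (Suc p0)" using blk_props[of "Suc p0" \<kappa> n] p0 unfolding N_def by auto
    define q where "q = blk_q \<kappa> (Suc p0)"
    define r where "r = blk_r \<kappa> (Suc p0)"
    define a where "a = N + lam (Suc j0) - Suc j0"
    have r1: "r \<ge> 1" using bp unfolding r_def .
    have G: "G_mat lam n y \<kappa> $$ (j0,p0) = (if int N + int (lam (Suc j0)) - int (Suc j0) - int r + 1 \<ge> 0
         then of_nat ((N + lam (Suc j0) - Suc j0) choose (r - 1)) * y q ^ nat (int N + int (lam (Suc j0)) - int (Suc j0) - int r + 1) else 0)"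
      unfolding G_mat_def Let_def N_def' q_def r_def using j0 p0 by simp
    have e: "int N + int (lam (Suc j0)) - int (Suc j0) - int r + 1 = int a - int (r - 1)"
      using j0 r1 unfolding a_def by (simp add: of_nat_diff)
    have L: "Lp p0 (X ^ a) = of_nat (a choose (r - 1)) * y q ^ (a - (r - 1))"
      unfolding Lp_def X_def q_def[symmetric] r_def[symmetric] by (rule Lf_X_pow)
    show ?thesis
    proof (cases "r - 1 \<le> a")
      case True
      then have "nat (int a - int (r - 1)) = a - (r - 1)" by simp
      then show ?thesis using G e L True unfolding a_def by simp
    next
      case False
      then show ?thesis using G e L unfolding a_def by (simp add: binomial_eq_0)
    qed
  qed
  obtain R where R: "X ^ (N - 1 + m) = R + (if N \<le> N - 1 + m then H (N - 1 + m - N) (X # map (\<lambda>x. [:x:]) xs) else 0) * Pl xs"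
    "\<forall>i\<ge>N. coeff R i = 0" "coeff R (N - 1) = H m xs"
    using newton[of "N - 1 + m" xs] N1 unfolding lenxs X_def by auto
  define Q where "Q = (if N \<le> N - 1 + m then H (N - 1 + m - N) (X # map (\<lambda>x. [:x:]) xs) else 0)"
  have RQ: "X ^ (N - 1 + m) = R + Q * Pl xs" using R(1) unfolding Q_def .
  have PlP: "Pl xs = (\<Prod>q=1..n. [:-y q,1:] ^ \<kappa> q)" unfolding xs_def by (rule Pl_rep_list)
  have van: "Lp p0 (g * Pl xs) = 0" if p0: "p0 < N" for p0 g
  proof -
    have bp: "1 \<le> blk_q \<kappa> (Suc p0) \<and> blk_q \<kappa> (Suc p0) \<le> n \<and> 1 \<le> blk_r \<kappa> (Suc p0) \<and> blk_r \<kappa> (Suc p0) \<le> \<kappa> (blk_q \<kappa> (Suc p0))"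
      using blk_props[of "Suc p0" \<kappa> n] p0 unfolding N_def by auto
    define q where "q = blk_q \<kappa> (Suc p0)"
    have "[:-y q,1:] ^ \<kappa> q dvd Pl xs" unfolding PlP using bp unfolding q_def
      by (intro dvd_prodI) auto
    then have "[:-y q,1:] ^ \<kappa> q dvd g * Pl xs" by (rule dvd_mult)
    moreover have "blk_r \<kappa> (Suc p0) - 1 < \<kappa> q" using bp unfolding q_def by auto
    ultimately show ?thesis unfolding Lp_def q_def[symmetric] by (intro Lf_vanish)
  qed
  define A where "A = G_mat empty_part n y \<kappa>"
  define B where "B = G_mat (one_part m) n y \<kappa>"
  have Ac: "A \<in> carrier_mat N N" unfolding A_def G_mat_def Let_def N_def' by simp
  have Bc: "B \<in> carrier_mat N N" unfolding B_def G_mat_def Let_def N_def' by simp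
  have Ae: "A $$ (j0,p0) = Lp p0 (X ^ (N - Suc j0))" if "j0 < N" "p0 < N" for j0 p0
    unfolding A_def using entry[OF that] by (simp add: empty_part_def)
  have Be0: "B $$ (0,p0) = Lp p0 (X ^ (N - 1 + m))" if "p0 < N" for p0
  proof -
    have "N + m - Suc 0 = N - 1 + m" using N1 by simp
    then show ?thesis unfolding B_def using entry[OF _ that, of 0] N1 by (simp add: one_part_def)
  qed
  have Be: "B $$ (j0,p0) = A $$ (j0,p0)" if "j0 < N" "p0 < N" "j0 \<noteq> 0" for j0 p0
    unfolding B_def using entry[OF that(1,2)] Ae[OF that(1,2)] that(3) by (simp add: one_part_def)
  define E where "E = mat N N (\<lambda>(i,j). if i = 0 then coeff R (N - Suc j) else if i = j then 1 else 0)"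
  have Ec: "E \<in> carrier_mat N N" unfolding E_def by simp
  have detE: "det E = coeff R (N - 1)"
  proof -
    have ut: "upper_triangular E" unfolding E_def upper_triangular_def by auto
    have "det E = prod_list (diag_mat E)" by (rule det_upper_triangular[OF ut Ec])
    also have "\<dots> = (\<Prod>i=0..<N. E $$ (i,i))" using Ec by (simp add: prod_list_diag_prod)
    also have "\<dots> = (\<Prod>i=0..<N. if i = 0 then coeff R (N - 1) else 1)"
      by (intro prod.cong) (auto simp: E_def)
    also have "\<dots> = coeff R (N - 1)" using N1 by (simp add: prod.delta)
    finally show ?thesis .
  qed
  have LpR: "Lp p0 R = (\<Sum>k<N. coeff R k * Lp p0 (X ^ k))" for p0
  proof -
    have "degree R \<le> N - 1" using R(2) N1 by (intro degree_le) auto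
    then have "R = (\<Sum>k\<le>N - 1. monom (coeff R k) k)" by (simp add: poly_as_sum_of_monoms')
    also have "{..N - 1} = {..<N}" using N1 by auto
    finally have "R = (\<Sum>k<N. smult (coeff R k) (X ^ k))" by (simp add: monom_altdef X_def)
    then have "Lp p0 R = Lp p0 (\<Sum>k<N. smult (coeff R k) (X ^ k))" by (rule arg_cong)
    also have "\<dots> = (\<Sum>k<N. coeff R k * Lp p0 (X ^ k))" unfolding Lp_def by (simp add: Lf_sum Lf_smult)
    finally show ?thesis .
  qed
  have BEA: "B = E * A"
  proof (rule eq_matI)
    show "dim_row B = dim_row (E * A)" "dim_col B = dim_col (E * A)" using Ac Bc Ec by auto
    fix i j assume i: "i < dim_row (E * A)" and j: "j < dim_col (E * A)"
    then have i': "i < N" and j': "j < N" using Ac Ec by auto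
    have prod: "(E * A) $$ (i,j) = (\<Sum>k\<in>{0..<N}. E $$ (i,k) * A $$ (k,j))"
      using i' j' Ac Ec by (simp add: scalar_prod_def)
    show "B $$ (i,j) = (E * A) $$ (i,j)"
    proof (cases "i = 0")
      case True
      have "(E * A) $$ (i,j) = (\<Sum>k\<in>{0..<N}. coeff R (N - Suc k) * Lp j (X ^ (N - Suc k)))"
        unfolding prod using j' True by (intro sum.cong) (auto simp: E_def Ae)
      also have "\<dots> = (\<Sum>k<N. coeff R (N - Suc k) * Lp j (X ^ (N - Suc k)))"
        by (simp add: atLeast0LessThan)
      also have "\<dots> = (\<Sum>k<N. coeff R k * Lp j (X ^ k))"
        by (rule sum.nat_diff_reindex[where g = "\<lambda>k. coeff R k * Lp j (X ^ k)"])
      also have "\<dots> = Lp j R" by (rule LpR[symmetric])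
      also have "\<dots> = Lp j (R + Q * Pl xs)" using van[OF j'] by (simp add: Lp_def Lf_add)
      also have "\<dots> = B $$ (i,j)" using Be0[OF j'] RQ True by simp
      finally show ?thesis by simp
    next
      case False
      have "(E * A) $$ (i,j) = (\<Sum>k\<in>{0..<N}. if k = i then A $$ (k,j) else 0)"
        unfolding prod using False i' by (intro sum.cong) (auto simp: E_def)
      also have "\<dots> = A $$ (i,j)" using i' by (simp add: sum.delta')
      finally show ?thesis using Be[OF i' j' False] by simp
    qed
  qed
  have detB: "det B = det E * det A" unfolding BEA by (rule det_mult[OF Ec Ac])
  have detA: "det A \<noteq> 0"
  proof
    assume d0: "det A = 0"
    have Atc: "transpose_mat A \<in> carrier_mat N N" using Ac by simp
    have "det (transpose_mat A) = 0" using d0 det_transpose[OF Ac] by simp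
    then obtain v where v: "v \<in> carrier_vec N" "v \<noteq> 0\<^sub>v N" "transpose_mat A *\<^sub>v v = 0\<^sub>v N"
      using det_0_iff_vec_prod_zero_field[OF Atc] by auto
    have col0: "(\<Sum>j0\<in>{0..<N}. A $$ (j0,p0) * v $ j0) = 0" if p0: "p0 < N" for p0
    proof -
      have "(transpose_mat A *\<^sub>v v) $ p0 = 0" using v(3) p0 by simp
      then show ?thesis using p0 Ac v(1) by (simp add: scalar_prod_def)
    qed
    define f where "f = (\<Sum>j0\<in>{0..<N}. smult (v $ j0) (X ^ (N - Suc j0)))"
    have cf: "coeff f i = (\<Sum>k\<in>{0..<N}. if N - Suc k = i then v $ k else 0)" for i
      unfolding f_def X_def by (simp add: coeff_sum X_pow_monom) (intro sum.cong, auto)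
    have Lpf: "Lp p0 f = 0" if p0: "p0 < N" for p0
    proof -
      have "Lp p0 f = (\<Sum>j0\<in>{0..<N}. v $ j0 * Lp p0 (X ^ (N - Suc j0)))"
        unfolding f_def Lp_def by (simp add: Lf_sum Lf_smult)
      also have "\<dots> = (\<Sum>j0\<in>{0..<N}. A $$ (j0,p0) * v $ j0)"
        using p0 by (intro sum.cong) (auto simp: Ae)
      finally show ?thesis using col0[OF p0] by simp
    qed
    obtain j0 where j0: "j0 < N" "v $ j0 \<noteq> 0"
    proof (rule ccontr)
      assume "\<not> thesis"
      then have "\<forall>j0<N. v $ j0 = 0" using that by blast
      then have "v = 0\<^sub>v N" using v(1) by (intro eq_vecI) auto
      then show False using v(2) by simp
    qed
    have "coeff f (N - Suc j0) = (\<Sum>k\<in>{0..<N}. if k = j0 then v $ k else 0)"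
      unfolding cf using j0(1) by (intro sum.cong) auto
    also have "\<dots> = v $ j0" using j0(1) by (simp add: sum.delta')
    finally have fnz: "f \<noteq> 0" using j0(2) by auto
    have degf: "degree f \<le> N - 1"
      by (rule degree_le) (auto simp: cf intro!: sum.neutral)
    have dv: "[:-y q,1:] ^ \<kappa> q dvd f" if q: "q \<in> {1..n}" for q
    proof (rule Lf_dvd, intro allI impI)
      fix k assume k: "k < \<kappa> q"
      define p0 where "p0 = cs \<kappa> (q - 1) + k"
      have bi: "blk_q \<kappa> (Suc p0) = q \<and> blk_r \<kappa> (Suc p0) = Suc k"
        using blk_inv[of q "Suc k" \<kappa>] q k unfolding p0_def by auto
      have "cs \<kappa> q = cs \<kappa> (q - 1) + \<kappa> q" using q cs_Suc[of \<kappa> "q - 1"] by simp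
      moreover have "cs \<kappa> q \<le> cs \<kappa> n" using q by (intro cs_mono) auto
      ultimately have "p0 < N" using k unfolding p0_def N_def by simp
      then have "Lp p0 f = 0" by (rule Lpf)
      then show "Lf (y q) k f = 0" unfolding Lp_def using bi by simp
    qed
    have inj: "inj_on y {1..n}" using assms(3) by (auto simp: inj_on_def)
    have "Pl xs dvd f" unfolding PlP by (rule prod_dvd) (use dv inj fnz in auto)
    then have "degree (Pl xs) \<le> degree f" using fnz by (rule dvd_imp_degree_le)
    then show False using degf N1 degree_Pl[of xs] lenxs by simp
  qed
  have "hom_sym m (rep_list n y \<kappa>) = det E"
    using detE R(3) unfolding xs_def by (simp add: hom_sym_H)
  also have "\<dots> = det B / det A" using detB detA by simp
  finally show ?thesis unfolding A_def B_def .
qed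


end
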